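(* Let $n\ge 4$ and let $\mathcal{G}=\{G_1,G_2,\ldots,G_n\}$ be a family of $n$ graphs, all on the same vertex set $[n]=\{1,\ldots,n\}$, such that $e(G_i)>\binom{n-1}{2}+1$ for every $i=1,2,\ldots,n$. Then $\mathcal{G}$ admits a rainbow Hamiltonian cycle.
   Context: $e(G)$ denotes the number of edges of $G$. Given a family $\mathcal{G}=\{G_1,\ldots,G_n\}$ of graphs on a common vertex set $V$ with $|V|=n$, a rainbow Hamiltonian cycle in $\mathcal{G}$ is a Hamiltonian cycle $C$ on $V$ (a cycle visiting every vertex exactly once, so it has $n$ edges) whose edges can be labeled $e_1,\ldots,e_n$ with $e_i\in E(G_i)$ for each $i$; i.e. distinct edges of $C$ belong to distinct graphs of the family, each graph used once. *)

theory Defs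
  imports Main
begin

definition simple_graph_on :: "'a set \<Rightarrow> 'a set set \<Rightarrow> bool" where
  "simple_graph_on V E \<longleftrightarrow> (\<forall>e\<in>E. e \<subseteq> V \<and> card e = 2)"

definition num_edges :: "'a set set \<Rightarrow> nat" where
  "num_edges E = card E"

text \<open>A Hamiltonian cycle on V (with |V| \<ge> 3) is given by a cyclic ordering
  vs of the vertices; its edges are {vs!j, vs!((j+1) mod |V|)} for j < |V|.\<close>
definition ham_cycle_seq :: "'a set \<Rightarrow> 'a list \<Rightarrow> bool" where
  "ham_cycle_seq V vs \<longleftrightarrow> distinct vs \<and> set vs = V \<and> length vs \<ge> 3"

definition cycle_edge :: "'a list \<Rightarrow> nat \<Rightarrow> 'a set" where
  "cycle_edge vs j = {vs ! j, vs ! ((j + 1) mod length vs)}"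

text \<open>The family G_1,...,G_n (indexed by {1..n}) on vertex set {1..n} has a
  rainbow Hamiltonian cycle: there is a Hamiltonian cycle and a bijection
  assigning to each graph index i a distinct edge position of the cycle whose
  edge lies in G_i.\<close>
definition rainbow_ham_cycle :: "nat \<Rightarrow> (nat \<Rightarrow> nat set set) \<Rightarrow> bool" where
  "rainbow_ham_cycle n G \<longleftrightarrow>
     (\<exists>vs \<sigma>. ham_cycle_seq {1..n} vs \<and> bij_betw \<sigma> {1..n} {..<n} \<and>
        (\<forall>i\<in>{1..n}. cycle_edge vs (\<sigma> i) \<in> G i))"

end

theory Submission
  imports Defs
begin

lemma hall:
  fixes A :: "'i \<Rightarrow> 'y set"
  assumes "finite I" "\<And>i. i \<in> I \<Longrightarrow> finite (A i)"
    "\<And>J. J \<subseteq> I \<Longrightarrow> card J \<le> card (\<Union>(A ` J))"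
  shows "\<exists>f. inj_on f I \<and> (\<forall>i\<in>I. f i \<in> A i)"
  using assms
proof (induction "card I" arbitrary: I A rule: less_induct)
  case less
  show ?case
  proof (cases "I = {}")
    case True then show ?thesis by auto
  next
    case False
    show ?thesis
    proof (cases "\<exists>J. J \<subseteq> I \<and> J \<noteq> {} \<and> J \<noteq> I \<and> card J = card (\<Union>(A ` J))")
      case True
      then obtain J where J: "J \<subseteq> I" "J \<noteq> {}" "J \<noteq> I" "card J = card (\<Union>(A ` J))" by blast
      define U where "U = \<Union>(A ` J)"
      have fJ: "finite J" using J(1) less.prems(1) finite_subset by blast
      have cJ: "card J < card I" using J(1,3) less.prems(1) by (meson psubsetI psubset_card_mono)
      obtain f1 where f1: "inj_on f1 J" "\<forall>i\<in>J. f1 i \<in> A i"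
      proof -
        have "\<And>i. i \<in> J \<Longrightarrow> finite (A i)" using less.prems(2) J(1) by auto
        moreover have "\<And>K. K \<subseteq> J \<Longrightarrow> card K \<le> card (\<Union>(A ` K))" using less.prems(3) J(1) by auto
        ultimately show ?thesis using less.hyps[OF cJ fJ, of A] that by blast
      qed
      have fU: "finite U" using fJ less.prems(2) J(1) unfolding U_def by auto
      have "\<exists>f. inj_on f (I - J) \<and> (\<forall>i\<in>I-J. f i \<in> A i - U)"
      proof (rule less.hyps)
        have "card J > 0" using fJ J(2) by (simp add: card_gt_0_iff)
        moreover have "card J \<le> card I" using J(1) less.prems(1) by (simp add: card_mono)
        ultimately show "card (I - J) < card I" using J(1) fJ by (simp add: card_Diff_subset)
        show "finite (I - J)" using less.prems(1) by auto
        show "\<And>i. i \<in> I - J \<Longrightarrow> finite (A i - U)" using less.prems(2) by auto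
        fix K assume K: "K \<subseteq> I - J"
        have fK: "finite K" using K less.prems(1) finite_subset by blast
        have eq: "\<Union>((\<lambda>i. A i - U) ` K) = \<Union>(A ` (K \<union> J)) - U" unfolding U_def by auto
        have "card (K \<union> J) \<le> card (\<Union>(A ` (K \<union> J)))" using K J(1) by (intro less.prems(3)) auto
        moreover have "card (K \<union> J) = card K + card J" using K fK fJ by (subst card_Un_disjoint) auto
        moreover have "card (\<Union>(A ` (K \<union> J)) - U) = card (\<Union>(A ` (K \<union> J))) - card U"
          using fU by (intro card_Diff_subset) (auto simp: U_def)
        ultimately show "card K \<le> card (\<Union>((\<lambda>i. A i - U) ` K))" using J(4) eq unfolding U_def by simp
      qed
      then obtain f2 where f2: "inj_on f2 (I - J)" "\<forall>i\<in>I-J. f2 i \<in> A i - U" by blast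
      define f where "f i = (if i \<in> J then f1 i else f2 i)" for i
      have "inj_on f I"
      proof (rule inj_onI)
        fix x y assume xy: "x \<in> I" "y \<in> I" "f x = f y"
        show "x = y"
        proof (cases "x \<in> J"; cases "y \<in> J")
          assume "x \<in> J" "y \<in> J" then show ?thesis using xy f1 by (auto simp: f_def inj_on_def)
        next
          assume "x \<notin> J" "y \<notin> J" then show ?thesis using xy f2 by (auto simp: f_def inj_on_def)
        next
          assume a: "x \<in> J" "y \<notin> J"
          then have "f x \<in> U" using f1 unfolding f_def U_def by auto
          moreover have "f y \<notin> U" using a f2(2) xy(2) unfolding f_def by auto
          ultimately show ?thesis using xy by simp
        next
          assume a: "x \<notin> J" "y \<in> J"
          then have "f y \<in> U" using f1 unfolding f_def U_def by auto
          moreover have "f x \<notin> U" using a f2(2) xy(1) unfolding f_def by auto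
          ultimately show ?thesis using xy by simp
        qed
      qed
      moreover have "\<forall>i\<in>I. f i \<in> A i" using f1 f2 unfolding f_def by auto
      ultimately show ?thesis by blast
    next
      case noJ: False
      obtain i0 where i0: "i0 \<in> I" using False by blast
      have "card {i0} \<le> card (A i0)" using less.prems(3)[of "{i0}"] i0 by simp
      then have "A i0 \<noteq> {}" using less.prems(2)[OF i0] by auto
      then obtain y where y: "y \<in> A i0" by blast
      have "\<exists>f. inj_on f (I - {i0}) \<and> (\<forall>i\<in>I-{i0}. f i \<in> A i - {y})"
      proof (rule less.hyps)
        show "card (I - {i0}) < card I" using i0 less.prems(1) by (meson card_Diff1_less)
        show "finite (I - {i0})" using less.prems(1) by auto
        show "\<And>i. i \<in> I - {i0} \<Longrightarrow> finite (A i - {y})" using less.prems(2) by auto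
        fix K assume K: "K \<subseteq> I - {i0}"
        show "card K \<le> card (\<Union>((\<lambda>i. A i - {y}) ` K))"
        proof (cases "K = {}")
          case True then show ?thesis by simp
        next
          case Kne: False
          have KI: "K \<subseteq> I" "K \<noteq> I" using K i0 by auto
          have le: "card K \<le> card (\<Union>(A ` K))" using less.prems(3) KI by auto
          have "card K \<noteq> card (\<Union>(A ` K))" using noJ KI Kne by blast
          then have lt: "card K < card (\<Union>(A ` K))" using le by simp
          have eq: "\<Union>((\<lambda>i. A i - {y}) ` K) = \<Union>(A ` K) - {y}" by auto
          have fin: "finite (\<Union>(A ` K))" using less.prems(1,2) KI by (meson finite_UN_I rev_finite_subset subsetD)
          have "card (\<Union>(A ` K) - {y}) \<ge> card (\<Union>(A ` K)) - 1"
            using fin by (simp add: card_Diff_singleton_if)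
          then show ?thesis using lt eq by simp
        qed
      qed
      then obtain f2 where f2: "inj_on f2 (I - {i0})" "\<forall>i\<in>I-{i0}. f2 i \<in> A i - {y}" by blast
      define f where "f = f2(i0 := y)"
      have "inj_on f I"
      proof (rule inj_onI)
        fix x z assume xz: "x \<in> I" "z \<in> I" "f x = f z"
        show "x = z"
        proof (cases "x = i0"; cases "z = i0")
          assume "x \<noteq> i0" "z \<noteq> i0" then show ?thesis using xz f2(1) by (auto simp: f_def inj_on_def)
        next
          assume "x = i0" "z \<noteq> i0" then show ?thesis using xz f2(2) by (auto simp: f_def)
        next
          assume "x \<noteq> i0" "z = i0" then show ?thesis using xz f2(2) by (auto simp: f_def)
        qed simp
      qed
      moreover have "\<forall>i\<in>I. f i \<in> A i" using f2 y unfolding f_def by auto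
      ultimately show ?thesis by blast
    qed
  qed
qed

fun pedges :: "'a list \<Rightarrow> 'a set list" where
  "pedges (x # y # zs) = {x, y} # pedges (y # zs)"
| "pedges _ = []"

lemma length_pedges[simp]: "length (pedges xs) = length xs - 1"
  by (induction xs rule: pedges.induct) auto

lemma nth_pedges: "i + 1 < length xs \<Longrightarrow> pedges xs ! i = {xs ! i, xs ! (i + 1)}"
proof (induction xs arbitrary: i rule: pedges.induct)
  case (1 x y zs)
  then show ?case by (cases i) auto
qed auto

lemma pedges_append: "xs \<noteq> [] \<Longrightarrow> pedges (xs @ y # ys) = pedges xs @ [{last xs, y}] @ pedges (y # ys)"
  by (induction xs rule: pedges.induct) auto

lemma pedges_snoc: "xs \<noteq> [] \<Longrightarrow> pedges (xs @ [y]) = pedges xs @ [{last xs, y}]"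
  using pedges_append[of xs y "[]"] by simp

lemma pedges_Cons: "xs \<noteq> [] \<Longrightarrow> pedges (a # xs) = {a, hd xs} # pedges xs"
  by (cases xs) auto

lemma pedges_rev: "pedges (rev xs) = rev (pedges xs)"
proof (induction xs)
  case Nil then show ?case by simp
next
  case (Cons x xs)
  show ?case
  proof (cases "xs = []")
    case True then show ?thesis by simp
  next
    case False
    have "pedges (rev (x # xs)) = pedges (rev xs @ [x])" by simp
    also have "\<dots> = pedges (rev xs) @ [{last (rev xs), x}]" using False by (simp add: pedges_snoc)
    also have "\<dots> = rev (pedges xs) @ [{x, hd xs}]" using Cons False by (simp add: last_rev insert_commute)
    also have "\<dots> = rev (pedges (x # xs))" using False by (simp add: pedges_Cons)
    finally show ?thesis .
  qed
qed

definition cedges :: "'a list \<Rightarrow> 'a set list" where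
  "cedges vs = pedges (vs @ [hd vs])"

lemma length_cedges[simp]: "length (cedges vs) = length vs"
  by (simp add: cedges_def)

lemma nth_cedges: "j < length vs \<Longrightarrow> cedges vs ! j = {vs ! j, vs ! ((j + 1) mod length vs)}"
proof -
  assume j: "j < length vs"
  have "cedges vs ! j = {(vs @ [hd vs]) ! j, (vs @ [hd vs]) ! (j + 1)}"
    unfolding cedges_def using j by (intro nth_pedges) simp
  moreover have "(vs @ [hd vs]) ! j = vs ! j" using j by (simp add: nth_append)
  moreover have "(vs @ [hd vs]) ! (j + 1) = vs ! ((j + 1) mod length vs)"
  proof (cases "j + 1 < length vs")
    case True then show ?thesis by (simp add: nth_append)
  next
    case False
    then have "j + 1 = length vs" using j by simp
    moreover have "vs \<noteq> []" using j by auto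
    ultimately show ?thesis using j by (simp add: nth_append hd_conv_nth)
  qed
  ultimately show ?thesis by simp
qed

lemma cedges_cycle_edge: "j < length vs \<Longrightarrow> cedges vs ! j = cycle_edge vs j"
  by (simp add: nth_cedges cycle_edge_def)

lemma cedges_rotate1: "length vs \<ge> 2 \<Longrightarrow> cedges (rotate1 vs) = rotate1 (cedges vs)"
proof -
  assume "length vs \<ge> 2"
  then obtain x y zs where vs: "vs = x # y # zs" by (metis One_nat_def Suc_1 Suc_le_length_iff)
  have "cedges (rotate1 vs) = pedges ((y # zs @ [x]) @ [y])" by (simp add: cedges_def vs)
  also have "\<dots> = pedges (y # zs @ [x]) @ [{x, y}]" by (subst pedges_snoc) auto
  also have "\<dots> = rotate1 (cedges vs)" by (simp add: cedges_def vs)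
  finally show ?thesis .
qed

lemma cedges_rotate: "length vs \<ge> 2 \<Longrightarrow> cedges (rotate p vs) = rotate p (cedges vs)"
proof (induction p)
  case 0 then show ?case by simp
next
  case (Suc p)
  then show ?case by (simp add: rotate_Suc cedges_rotate1)
qed

lemma sum_list_rotate1: "sum_list (rotate1 (xs :: nat list)) = sum_list xs"
  by (cases xs) auto

lemma sum_list_rotate: "sum_list (rotate p (xs :: nat list)) = sum_list xs"
  by (induction p) (auto simp: rotate_Suc sum_list_rotate1)

definition mis :: "(nat \<Rightarrow> nat set set) \<Rightarrow> nat set \<Rightarrow> nat set \<Rightarrow> nat" where
  "mis G I e = card {i\<in>I. e \<notin> G i}"

definition psi :: "(nat \<Rightarrow> nat set set) \<Rightarrow> nat set \<Rightarrow> nat list \<Rightarrow> nat" where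
  "psi G I vs = sum_list (map (mis G I) (cedges vs))"

lemma psi_rotate: "length vs \<ge> 2 \<Longrightarrow> psi G I (rotate p vs) = psi G I vs"
  by (simp add: psi_def cedges_rotate rotate_map[symmetric] sum_list_rotate)

lemma two_opt:
  assumes "seg \<noteq> []" "rest \<noteq> []"
  shows "psi G I (a # seg @ rest) + mis G I {a, last seg} + mis G I {hd seg, hd rest}
       = psi G I (a # rev seg @ rest) + mis G I {a, hd seg} + mis G I {last seg, hd rest}"
proof -
  let ?m = "mis G I"
  have r: "rest @ [a] = hd rest # (tl rest @ [a])" using assms(2) by simp
  have e1: "cedges (a # seg @ rest) = {a, hd seg} # pedges seg @ [{last seg, hd rest}] @ pedges (rest @ [a])"
    unfolding cedges_def using assms
    by (simp add: pedges_Cons pedges_append[of seg "hd rest" "tl rest @ [a]", folded r])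
  have e2: "cedges (a # rev seg @ rest) = {a, last seg} # rev (pedges seg) @ [{hd seg, hd rest}] @ pedges (rest @ [a])"
    unfolding cedges_def using assms
    by (simp add: pedges_Cons pedges_append[of "rev seg" "hd rest" "tl rest @ [a]", folded r] pedges_rev hd_rev last_rev)
  show ?thesis unfolding psi_def e1 e2 by (simp add: rev_map[symmetric])
qed

definition Dv :: "(nat \<Rightarrow> nat set set) \<Rightarrow> nat set \<Rightarrow> nat set \<Rightarrow> nat \<Rightarrow> nat" where
  "Dv G I V x = (\<Sum>u\<in>V-{x}. mis G I {x,u})"

lemma sum_nth_distinct: "distinct xs \<Longrightarrow> (\<Sum>k<length xs. f (xs!k)) = (\<Sum>u\<in>set xs. f u)"
proof -
  assume d: "distinct xs"
  have "set xs = (!) xs ` {..<length xs}" by (auto simp: set_conv_nth)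
  moreover have "inj_on ((!) xs) {..<length xs}" using d by (intro inj_on_nth) auto
  ultimately show ?thesis by (simp add: sum.reindex)
qed

lemma sum_list_nth: "sum_list (map f xs) = (\<Sum>k<length xs. f (xs!k))"
  by (simp add: sum_list_sum_nth atLeast0LessThan)

lemma local_ineq:
  assumes d: "distinct vs" and sV: "set vs = V" and len: "length vs = n" and n4: "n \<ge> 4"
    and vs: "vs = a # b # w"
    and opt: "\<And>us. distinct us \<Longrightarrow> set us = V \<Longrightarrow> psi G I vs \<le> psi G I us"
  shows "(n - 2) * mis G I {a,b} + psi G I vs \<le> Dv G I V a + Dv G I V b"
proof -
  let ?m = "mis G I"
  have lw: "length w = n - 2" using len vs by simp
  have wne: "w \<noteq> []" using lw n4 by auto
  have dw: "distinct w" and ab: "a \<noteq> b" "a \<notin> set w" "b \<notin> set w" using d vs by auto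
  have sw: "set w = V - {a, b}" using sV ab unfolding vs by auto
  have step: "?m {a,b} + ?m {w!k, w!(k+1)} \<le> ?m {a, w!k} + ?m {b, w!(k+1)}" if k: "k < n - 3" for k
  proof -
    define seg where "seg = b # take (k+1) w"
    define rest where "rest = drop (k+1) w"
    have vs2: "vs = a # seg @ rest" unfolding seg_def rest_def vs by simp
    have rne: "rest \<noteq> []" using k lw unfolding rest_def by simp
    have sne: "seg \<noteq> []" unfolding seg_def by simp
    have ls: "last seg = w ! k" unfolding seg_def using k lw wne
      by (simp add: last_conv_nth)
    have hr: "hd rest = w ! (k+1)" unfolding rest_def using k lw by (simp add: hd_drop_conv_nth)
    have hs: "hd seg = b" unfolding seg_def by simp
    define us where "us = a # rev seg @ rest"
    have "distinct us" "set us = V" using d sV unfolding us_def vs2 by auto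
    then have le: "psi G I vs \<le> psi G I us" using opt by blast
    have "psi G I vs + ?m {a, last seg} + ?m {hd seg, hd rest}
       = psi G I us + ?m {a, hd seg} + ?m {last seg, hd rest}"
      unfolding vs2 us_def using two_opt[OF sne rne] by simp
    then show ?thesis using le ls hr hs by simp
  qed
  have S1: "(\<Sum>k<n-3. ?m {a,b} + ?m {w!k, w!(k+1)}) \<le> (\<Sum>k<n-3. ?m {a, w!k} + ?m {b, w!(k+1)})"
    by (rule sum_mono) (use step in auto)
  have pw: "sum_list (map ?m (pedges w)) = (\<Sum>k<n-3. ?m {w!k, w!(k+1)})"
    unfolding sum_list_nth using lw by (intro sum.cong) (auto simp: nth_pedges)
  have L: "(\<Sum>k<n-3. ?m {a,b} + ?m {w!k, w!(k+1)}) = (n-3) * ?m {a,b} + sum_list (map ?m (pedges w))"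
    by (simp add: sum.distrib pw)
  have bl: "butlast w \<noteq> [] \<or> True" by simp
  have R1: "(\<Sum>k<n-3. ?m {a, w!k}) = (\<Sum>u\<in>V - {a,b,last w}. ?m {a,u})"
  proof -
    have "(\<Sum>k<n-3. ?m {a, w!k}) = (\<Sum>k<length (butlast w). ?m {a, butlast w ! k})"
      using lw by (intro sum.cong) (auto simp: nth_butlast)
    also have "\<dots> = (\<Sum>u\<in>set (butlast w). ?m {a,u})" using dw by (intro sum_nth_distinct) (simp add: distinct_butlast)
    also have "set (butlast w) = set w - {last w}"
    proof -
      have e: "butlast w @ [last w] = w" using wne by simp
      then have "distinct (butlast w @ [last w])" using dw by simp
      then have "last w \<notin> set (butlast w)" by simp
      moreover have "set w = set (butlast w) \<union> {last w}" using e by (metis set_append set_simps(1) set_simps(2))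
      ultimately show ?thesis by auto
    qed
    also have "set w - {last w} = V - {a,b,last w}" unfolding sw by blast
    finally show ?thesis .
  qed
  have R2: "(\<Sum>k<n-3. ?m {b, w!(k+1)}) = (\<Sum>u\<in>V - {a,b,hd w}. ?m {b,u})"
  proof -
    have "(\<Sum>k<n-3. ?m {b, w!(k+1)}) = (\<Sum>k<length (tl w). ?m {b, tl w ! k})"
      using lw by (intro sum.cong) (auto simp: nth_tl)
    also have "\<dots> = (\<Sum>u\<in>set (tl w). ?m {b,u})" using dw by (intro sum_nth_distinct) (simp add: distinct_tl)
    also have "set (tl w) = set w - {hd w}" using dw wne by (cases w) auto
    also have "set w - {hd w} = V - {a,b,hd w}" unfolding sw by blast
    finally show ?thesis .
  qed
  have fV: "finite V" using sV by (metis finite_set)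
  have lwV: "last w \<in> V" "hd w \<in> V" using last_in_set[OF wne] hd_in_set[OF wne] sw by blast+
  have lwn: "last w \<noteq> a" "last w \<noteq> b" "hd w \<noteq> a" "hd w \<noteq> b" using last_in_set[OF wne] hd_in_set[OF wne] ab by metis+
  have Da: "Dv G I V a = ?m {a,b} + ?m {a, last w} + (\<Sum>u\<in>V - {a,b,last w}. ?m {a,u})"
  proof -
    have "Dv G I V a = ?m {a,b} + (\<Sum>u\<in>V-{a}-{b}. ?m {a,u})"
      unfolding Dv_def using fV sV vs ab by (subst sum.remove[of _ b]) auto
    also have "(\<Sum>u\<in>V-{a}-{b}. ?m {a,u}) = ?m {a, last w} + (\<Sum>u\<in>V-{a}-{b}-{last w}. ?m {a,u})"
      using fV lwV lwn by (subst sum.remove[of _ "last w"]) auto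
    also have "V-{a}-{b}-{last w} = V - {a,b,last w}" by auto
    finally show ?thesis by simp
  qed
  have Db: "Dv G I V b = ?m {a,b} + ?m {b, hd w} + (\<Sum>u\<in>V - {a,b,hd w}. ?m {b,u})"
  proof -
    have "Dv G I V b = ?m {b,a} + (\<Sum>u\<in>V-{b}-{a}. ?m {b,u})"
      unfolding Dv_def using fV sV vs ab by (subst sum.remove[of _ a]) auto
    also have "(\<Sum>u\<in>V-{b}-{a}. ?m {b,u}) = ?m {b, hd w} + (\<Sum>u\<in>V-{b}-{a}-{hd w}. ?m {b,u})"
      using fV lwV lwn by (subst sum.remove[of _ "hd w"]) auto
    also have "V-{b}-{a}-{hd w} = V - {a,b,hd w}" by auto
    finally show ?thesis by (simp add: insert_commute)
  qed
  have P: "psi G I vs = ?m {a,b} + ?m {b, hd w} + sum_list (map ?m (pedges w)) + ?m {a, last w}"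
  proof -
    have "cedges vs = {a,b} # {b, hd w} # pedges w @ [{last w, a}]"
      unfolding cedges_def vs using wne by (simp add: pedges_Cons pedges_snoc)
    then show ?thesis unfolding psi_def by (simp add: insert_commute)
  qed
  have "(n-3) * ?m {a,b} + sum_list (map ?m (pedges w))
     \<le> (\<Sum>u\<in>V - {a,b,last w}. ?m {a,u}) + (\<Sum>u\<in>V - {a,b,hd w}. ?m {b,u})"
    using S1 L R1 R2 by (simp add: sum.distrib)
  moreover have "n - 2 = (n - 3) + 1" using n4 by simp
  ultimately show ?thesis using Da Db P by (simp add: algebra_simps)
qed

definition Nb :: "nat set set \<Rightarrow> nat set \<Rightarrow> nat \<Rightarrow> nat set" where
  "Nb E V x = {u\<in>V-{x}. {x,u} \<notin> E}"

definition Qs :: "nat set set \<Rightarrow> nat set \<Rightarrow> (nat \<times> nat) set" where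
  "Qs E V = Sigma V (Nb E V)"

lemma card_swap:
  assumes "finite U" "finite I"
  shows "(\<Sum>u\<in>U. card {i\<in>I. P u i}) = (\<Sum>i\<in>I. card {u\<in>U. P u i})"
proof -
  have "(\<Sum>u\<in>U. card {i\<in>I. P u i}) = (\<Sum>u\<in>U. \<Sum>i\<in>I. if P u i then 1 else 0)"
    using assms by (simp add: sum.inter_filter[symmetric])
  also have "\<dots> = (\<Sum>i\<in>I. \<Sum>u\<in>U. if P u i then 1 else 0)" by (rule sum.swap)
  also have "\<dots> = (\<Sum>i\<in>I. card {u\<in>U. P u i})"
    using assms by (simp add: sum.inter_filter[symmetric])
  finally show ?thesis .
qed

lemma Dv_sum: "finite V \<Longrightarrow> finite I \<Longrightarrow> Dv G I V x = (\<Sum>i\<in>I. card (Nb (G i) V x))"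
  unfolding Dv_def mis_def Nb_def by (rule card_swap) auto

lemma sum_Dv: "finite V \<Longrightarrow> finite I \<Longrightarrow> (\<Sum>v\<in>V. Dv G I V v) = (\<Sum>i\<in>I. card (Qs (G i) V))"
proof -
  assume f: "finite V" "finite I"
  have "(\<Sum>v\<in>V. Dv G I V v) = (\<Sum>v\<in>V. \<Sum>i\<in>I. card (Nb (G i) V v))" using f by (simp add: Dv_sum)
  also have "\<dots> = (\<Sum>i\<in>I. \<Sum>v\<in>V. card (Nb (G i) V v))" by (rule sum.swap)
  also have "\<dots> = (\<Sum>i\<in>I. card (Qs (G i) V))" unfolding Qs_def using f
    by (intro sum.cong refl card_SigmaI[symmetric]) (auto simp: Nb_def)
  finally show ?thesis .
qed

lemma card_Qs:
  assumes fV: "finite V" and sg: "\<forall>e\<in>E. e \<subseteq> V \<and> card e = 2"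
  shows "card (Qs E V) + 2 * card E = card V * (card V - 1)"
proof -
  define Pall where "Pall = Sigma V (\<lambda>v. V - {v})"
  define Pin where "Pin = {p\<in>Pall. {fst p, snd p} \<in> E}"
  have QP: "Qs E V = Pall - Pin" unfolding Qs_def Pall_def Pin_def Nb_def by auto
  have fP: "finite Pall" unfolding Pall_def using fV by simp
  have PinP: "Pin \<subseteq> Pall" unfolding Pin_def by blast
  have cPall: "card Pall = card V * (card V - 1)"
    unfolding Pall_def using fV by (simp add: card_SigmaI)
  define P1 where "P1 = {p\<in>Pin. fst p < snd p}"
  define P2 where "P2 = {p\<in>Pin. snd p < fst p}"
  have Pin12: "Pin = P1 \<union> P2" unfolding P1_def P2_def Pin_def Pall_def by auto
  have disj: "P1 \<inter> P2 = {}" unfolding P1_def P2_def by auto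
  have fPin: "finite Pin" using fP PinP by (rule finite_subset[rotated])
  have fin1: "finite P1" "finite P2" using fPin unfolding P1_def P2_def by simp_all
  have b1: "bij_betw (\<lambda>p. {fst p, snd p}) P1 E"
  proof (rule bij_betwI')
    fix x y assume xy: "x \<in> P1" "y \<in> P1"
    show "({fst x, snd x} = {fst y, snd y}) = (x = y)"
    proof
      assume e: "{fst x, snd x} = {fst y, snd y}"
      have "fst x < snd x" "fst y < snd y" using xy unfolding P1_def by simp_all
      then show "x = y" using e by (cases x, cases y) (auto simp: doubleton_eq_iff)
    qed simp
  next
    fix x assume "x \<in> P1" then show "{fst x, snd x} \<in> E" unfolding P1_def Pin_def by simp
  next
    fix e assume e: "e \<in> E"
    then obtain x y where xy: "e = {x,y}" "x \<noteq> y" using sg by (meson card_2_iff)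
    have xyV: "x \<in> V" "y \<in> V" using sg e xy by auto
    have eyx: "{y,x} \<in> E" using e xy by (simp add: insert_commute)
    show "\<exists>p\<in>P1. e = {fst p, snd p}"
    proof (cases "x < y")
      case True
      have "(x,y) \<in> P1" unfolding P1_def Pin_def Pall_def using True xyV e xy by simp
      then show ?thesis using xy by force
    next
      case False
      then have "y < x" using xy by simp
      then have "(y,x) \<in> P1" unfolding P1_def Pin_def Pall_def using xyV eyx by simp
      then show ?thesis using xy by (intro bexI[of _ "(y,x)"]) (simp_all add: insert_commute)
    qed
  qed
  have b2: "bij_betw (\<lambda>p. (snd p, fst p)) P1 P2"
  proof (rule bij_betwI')
    fix x y assume "x \<in> P1" "y \<in> P1"
    then show "((snd x, fst x) = (snd y, fst y)) = (x = y)" by (simp add: prod_eq_iff conj_commute)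
  next
    fix x assume x: "x \<in> P1"
    have "{snd x, fst x} = {fst x, snd x}" by (rule insert_commute)
    then show "(snd x, fst x) \<in> P2" using x
      unfolding P1_def P2_def Pin_def Pall_def by auto
  next
    fix y assume y: "y \<in> P2"
    have "{snd y, fst y} = {fst y, snd y}" by (rule insert_commute)
    then have "(snd y, fst y) \<in> P1" using y unfolding P1_def P2_def Pin_def Pall_def by auto
    then show "\<exists>x\<in>P1. y = (snd x, fst x)" by force
  qed
  have "card Pin = 2 * card E"
    using Pin12 disj fin1 bij_betw_same_card[OF b1] bij_betw_same_card[OF b2]
    by (simp add: card_Un_disjoint)
  moreover have "card (Pall - Pin) = card Pall - card Pin" using fPin PinP by (rule card_Diff_subset)
  moreover have "card Pin \<le> card Pall" using fP PinP by (rule card_mono)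
  ultimately show ?thesis using QP cPall by simp
qed

lemma pair_bound:
  assumes fV: "finite V" and ab: "a \<in> V" "b \<in> V" "a \<noteq> b"
  shows "2 * (card (Nb E V a) + card (Nb E V b)) \<le> card (Qs E V) + 2"
proof -
  define X1 where "X1 = ({a} \<times> Nb E V a) \<union> ({b} \<times> Nb E V b)"
  define X2 where "X2 = (\<lambda>p. (snd p, fst p)) ` X1"
  have fN: "finite (Nb E V x)" for x using fV unfolding Nb_def by simp
  have dj: "({a} \<times> Nb E V a) \<inter> ({b} \<times> Nb E V b) = {}" using ab by blast
  have cX1: "card X1 = card (Nb E V a) + card (Nb E V b)"
    unfolding X1_def using dj fN by (simp add: card_Un_disjoint card_cartesian_product_singleton)
  have "inj_on (\<lambda>p. (snd p, fst p)) X1" by (rule inj_onI) (simp add: prod_eq_iff)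
  then have cX2: "card X2 = card X1" unfolding X2_def by (rule card_image)
  have sub1: "X1 \<subseteq> Qs E V" unfolding X1_def Qs_def Nb_def using ab by blast
  have sub2: "X2 \<subseteq> Qs E V"
  proof
    fix p assume "p \<in> X2"
    then obtain x u where p: "p = (u, x)" "(x,u) \<in> X1" unfolding X2_def by auto
    then have "x \<in> V" "u \<in> V" "u \<noteq> x" "{x,u} \<notin> E" unfolding X1_def Nb_def using ab by blast+
    moreover have "{u,x} = {x,u}" by (rule insert_commute)
    ultimately show "p \<in> Qs E V" unfolding p Qs_def Nb_def by simp
  qed
  have int: "X1 \<inter> X2 \<subseteq> {(a,b),(b,a)}"
  proof
    fix p assume p: "p \<in> X1 \<inter> X2"
    then have "fst p \<in> {a,b}" unfolding X1_def by (cases p) auto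
    moreover have "snd p \<in> {a,b}" using p unfolding X2_def X1_def by force
    moreover have "fst p \<noteq> snd p" using p unfolding X1_def Nb_def by (cases p) auto
    ultimately show "p \<in> {(a,b),(b,a)}" by (cases p) auto
  qed
  have fQ: "finite (Qs E V)" unfolding Qs_def using fV fN by (simp add: finite_SigmaI)
  have fX: "finite X1" "finite X2" using sub1 sub2 fQ by (simp_all add: finite_subset)
  have "card X1 + card X2 = card (X1 \<union> X2) + card (X1 \<inter> X2)" using fX by (rule card_Un_Int)
  moreover have "card (X1 \<union> X2) \<le> card (Qs E V)" using sub1 sub2 fQ by (simp add: card_mono)
  moreover have "card (X1 \<inter> X2) \<le> 2"
  proof -
    have "card (X1 \<inter> X2) \<le> card {(a,b),(b,a)}" using int by (rule card_mono[rotated]) simp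
    also have "\<dots> \<le> Suc (card {(b,a)})" by (rule card_insert_le_m1) simp_all
    finally show ?thesis by simp
  qed
  moreover have "2 * (card (Nb E V a) + card (Nb E V b)) = card X1 + card X2" using cX1 cX2 by simp
  ultimately show ?thesis by linarith
qed

lemma mod_cyc_False:
  fixes n j k :: nat
  assumes "n \<ge> 3" "j < n" "k < n" "j = (k+1) mod n" "k = (j+1) mod n"
  shows False
proof (cases "j + 1 < n")
  case True
  have m1: "(j+1) mod n = j + 1" using True by simp
  have k: "k = j + 1" using assms(5) m1 by linarith
  show False
  proof (cases "k + 1 < n")
    case True
    have "(k+1) mod n = k + 1" using True by simp
    then show False using assms(4) k by linarith
  next
    case False
    then have kn: "k + 1 = n" using assms(3) by simp
    then have "(k+1) mod n = 0" by simp
    then have "j = 0" using assms(4) by linarith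
    then show False using k kn assms(1) by linarith
  qed
next
  case False
  then have jn: "j + 1 = n" using assms(2) by simp
  then have "(j+1) mod n = 0" by simp
  then have k0: "k = 0" using assms(5) by linarith
  have "(0+1) mod n = 1" using assms(1) by simp
  then have "j = 1" using assms(4) k0 by simp
  then show False using jn assms(1) by linarith
qed

lemma arith_final:
  fixes n t s P :: nat
  assumes "3 \<le> t" "t + 3 \<le> n" "n + 1 \<le> s + t" "t * s \<le> P" "(n - 1) * P \<le> n * (2 * n - 6)"
  shows False
proof -
  obtain a where a: "t = 3 + a" using assms(1) le_iff_add by blast
  obtain b where b: "n = t + 3 + b" using assms(2) le_iff_add by blast
  define c where "c = a + b"
  have n: "n = 6 + c" using a b c_def by simp
  have s: "s \<ge> 4 + b" using assms(3) a b by simp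
  have "t * (4 + b) \<le> t * s" using s by (rule mult_le_mono2)
  moreover have "12 + 3 * c \<le> t * (4 + b)" using a c_def by (simp add: algebra_simps)
  ultimately have P: "12 + 3 * c \<le> P" using assms(4) by linarith
  have "(5 + c) * (12 + 3 * c) \<le> (5 + c) * P" using P by (rule mult_le_mono2)
  moreover have "(n - 1) * P = (5 + c) * P" using n by simp
  moreover have "n * (2 * n - 6) = (6 + c) * (6 + 2 * c)" using n by simp
  ultimately have "(5 + c) * (12 + 3 * c) \<le> (6 + c) * (6 + 2 * c)" using assms(5) by linarith
  then have "60 + 27 * c + 3 * (c * c) \<le> 36 + 18 * c + 2 * (c * c)" by (simp add: algebra_simps)
  then show False by linarith
qed

lemma aux_lin: "(q::nat) + g = N \<Longrightarrow> N = X + 2 * (k + 3) \<Longrightarrow> X + 4 \<le> g \<Longrightarrow> q \<le> 2 * k + 2"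
  by arith

theorem mainTheorem1:
  fixes n :: nat and G :: "nat \<Rightarrow> nat set set"
  assumes "n \<ge> 4"
    and "\<And>i. i \<in> {1..n} \<Longrightarrow> simple_graph_on {1..n} (G i)"
    and "\<And>i. i \<in> {1..n} \<Longrightarrow> num_edges (G i) > (n - 1 choose 2) + 1"
  shows "rainbow_ham_cycle n G"
proof -
  define V where "V = {1..n}"
  note n4 = assms(1)
  have fV: "finite V" and cV: "card V = n" unfolding V_def by simp_all
  have sg: "\<forall>e\<in>G i. e \<subseteq> V \<and> card e = 2" if "i \<in> V" for i
    using assms(2) that unfolding V_def simple_graph_on_def by blast
  have cQ: "card (Qs (G i) V) \<le> 2 * n - 6" if i: "i \<in> V" for i
  proof -
    have c1: "card (Qs (G i) V) + 2 * card (G i) = n * (n - 1)" using card_Qs[OF fV sg[OF i]] cV by simp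
    have g: "card (G i) > (n - 1 choose 2) + 1" using assms(3) i unfolding V_def num_edges_def by blast
    obtain k where k: "n = k + 4" using n4 le_iff_add by (metis add.commute)
    have "n - 1 = k + 3" using k by simp
    then have ch: "(n - 1 choose 2) = (k + 3) * (k + 2) div 2" by (simp add: choose_two)
    have "even ((k + 3) * (k + 2))" by simp
    then have e: "2 * ((k + 3) * (k + 2) div 2) = (k + 3) * (k + 2)" by simp
    have "2 * card (G i) \<ge> (k + 3) * (k + 2) + 4" using g ch e by linarith
    moreover have "n * (n - 1) = (k + 3) * (k + 2) + 2 * (k + 3)" using k by (simp add: algebra_simps)
    moreover have "2 * n - 6 = 2 * k + 2" using k by simp
    ultimately show ?thesis using c1
      using aux_lin[of "card (Qs (G i) V)" "2 * card (G i)" "n * (n - 1)" "(k + 3) * (k + 2)" k] by simp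
  qed
  define L where "L = {us. distinct us \<and> set us = V}"
  have "sorted_list_of_set V \<in> L" unfolding L_def using fV by simp
  then obtain vs where vsL: "vs \<in> L" and opt0: "\<And>us. us \<in> L \<Longrightarrow> psi G V vs \<le> psi G V us"
    using ex_has_least_nat[of "\<lambda>us. us \<in> L" _ "psi G V"] by blast
  have dvs: "distinct vs" and svs: "set vs = V" using vsL unfolding L_def by auto
  have lvs: "length vs = n" using distinct_card[OF dvs] svs cV by simp
  let ?ce = "\<lambda>j. cedges vs ! j"
  let ?m = "mis G V"
  let ?P = "psi G V vs"
  have ce: "?ce j = {vs ! j, vs ! ((j + 1) mod n)}" if "j < n" for j
    using nth_cedges[of j vs] lvs that by simp
  have Psum: "?P = (\<Sum>j<n. ?m (?ce j))" unfolding psi_def sum_list_nth using lvs by simp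
  have per: "(n - 2) * ?m (?ce p) + ?P \<le> Dv G V V (vs ! p) + Dv G V V (vs ! ((p + 1) mod n))"
    if p: "p < n" for p
  proof -
    define rs where "rs = rotate p vs"
    have drs: "distinct rs" "set rs = V" "length rs = n" using dvs svs lvs unfolding rs_def by simp_all
    have prs: "psi G V rs = ?P" unfolding rs_def using lvs n4 by (simp add: psi_rotate)
    have r0: "rs ! 0 = vs ! p" unfolding rs_def using lvs n4 p by (simp add: nth_rotate)
    have r1: "rs ! 1 = vs ! ((p + 1) mod n)" unfolding rs_def using lvs n4 p by (simp add: nth_rotate add.commute)
    have rs_eq: "rs = rs ! 0 # rs ! 1 # drop 2 rs"
    proof -
      have e1: "rs ! 0 # drop 1 rs = rs" using Cons_nth_drop_Suc[of 0 rs] drs(3) n4 by simp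
      have e2: "rs ! 1 # drop 2 rs = drop 1 rs" using Cons_nth_drop_Suc[of 1 rs] drs(3) n4 by (simp add: numeral_2_eq_2)
      show ?thesis using e1 e2 by simp
    qed
    have "(n - 2) * ?m {rs ! 0, rs ! 1} + psi G V rs \<le> Dv G V V (rs ! 0) + Dv G V V (rs ! 1)"
    proof (rule local_ineq[OF drs(1) drs(2) drs(3) n4 rs_eq])
      fix us assume "distinct us" "set us = V"
      then show "psi G V rs \<le> psi G V us" using opt0 prs unfolding L_def by simp
    qed
    then show ?thesis using r0 r1 prs ce[OF p] by simp
  qed
  have sumD: "(\<Sum>v\<in>V. Dv G V V v) \<le> n * (2 * n - 6)"
  proof -
    have "(\<Sum>v\<in>V. Dv G V V v) = (\<Sum>i\<in>V. card (Qs (G i) V))" using fV by (rule sum_Dv) (rule fV)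
    also have "\<dots> \<le> (\<Sum>i\<in>V. 2 * n - 6)" using cQ by (intro sum_mono) simp
    also have "\<dots> = n * (2 * n - 6)" using cV by simp
    finally show ?thesis .
  qed
  have glob: "(n - 1) * ?P \<le> n * (2 * n - 6)"
  proof -
    have "(\<Sum>p<n. (n - 2) * ?m (?ce p) + ?P) \<le> (\<Sum>p<n. Dv G V V (vs ! p) + Dv G V V (vs ! ((p + 1) mod n)))"
      using per by (intro sum_mono) simp
    moreover have "(\<Sum>p<n. (n - 2) * ?m (?ce p) + ?P) = (n - 2) * ?P + n * ?P"
      by (simp add: sum.distrib sum_distrib_left[symmetric] Psum)
    moreover have "(\<Sum>p<n. Dv G V V (vs ! p)) = (\<Sum>v\<in>V. Dv G V V v)"
      using sum_nth_distinct[OF dvs] lvs svs by simp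
    moreover have "(\<Sum>p<n. Dv G V V (vs ! ((p + 1) mod n))) = (\<Sum>v\<in>V. Dv G V V v)"
    proof -
      have "(\<Sum>p<n. Dv G V V (vs ! ((p + 1) mod n))) = (\<Sum>p<length (rotate1 vs). Dv G V V (rotate1 vs ! p))"
        using lvs by (intro sum.cong) (simp_all add: nth_rotate1)
      also have "\<dots> = (\<Sum>v\<in>set (rotate1 vs). Dv G V V v)" using dvs by (intro sum_nth_distinct) simp
      finally show ?thesis using svs by simp
    qed
    ultimately have "(n - 2) * ?P + n * ?P \<le> 2 * (n * (2 * n - 6))" using sumD by (simp add: sum.distrib)
    moreover have "(n - 2) * ?P + n * ?P = 2 * ((n - 1) * ?P)" using n4 by (simp add: algebra_simps)
    ultimately show ?thesis by linarith
  qed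
  have edge_bd: "?m (?ce p) \<le> n - 2" if p: "p < n" for p
  proof -
    define a where "a = vs ! p"
    define b where "b = vs ! ((p + 1) mod n)"
    have pm: "(p + 1) mod n < n" using n4 by simp
    have aV: "a \<in> V" "b \<in> V" unfolding a_def b_def using svs lvs p pm nth_mem by blast+
    have "p \<noteq> (p + 1) mod n"
    proof (cases "p + 1 < n")
      case True then show ?thesis by simp
    next
      case False
      then have "p + 1 = n" using p by simp
      then have "(p + 1) mod n = 0" by simp
      then show ?thesis using \<open>p + 1 = n\<close> n4 by simp
    qed
    then have ab: "a \<noteq> b" unfolding a_def b_def using dvs lvs p n4 by (simp add: nth_eq_iff_index_eq)
    have "Dv G V V a + Dv G V V b = (\<Sum>i\<in>V. card (Nb (G i) V a) + card (Nb (G i) V b))"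
      using fV by (simp add: Dv_sum sum.distrib)
    also have "\<dots> \<le> (\<Sum>i\<in>V. n - 2)"
    proof (rule sum_mono)
      fix i assume i: "i \<in> V"
      have "2 * (card (Nb (G i) V a) + card (Nb (G i) V b)) \<le> card (Qs (G i) V) + 2"
        using pair_bound[OF fV aV ab] .
      then show "card (Nb (G i) V a) + card (Nb (G i) V b) \<le> n - 2" using cQ[OF i] n4 by arith
    qed
    also have "\<dots> = n * (n - 2)" using cV by simp
    finally have D: "Dv G V V a + Dv G V V b \<le> n * (n - 2)" .
    have mP: "?m (?ce p) \<le> ?P" unfolding Psum using p by (intro member_le_sum) auto
    have "(n - 1) * ?m (?ce p) = (n - 2) * ?m (?ce p) + ?m (?ce p)"
    proof -
      have "n - 1 = Suc (n - 2)" using n4 by simp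
      then show ?thesis by simp
    qed
    then have "(n - 1) * ?m (?ce p) \<le> n * (n - 2)" using per[OF p] D mP unfolding a_def b_def
      by linarith
    show ?thesis
    proof (rule ccontr)
      assume "\<not> ?thesis"
      then have "n - 1 \<le> ?m (?ce p)" by simp
      then have "(n - 1) * (n - 1) \<le> (n - 1) * ?m (?ce p)" by simp
      then have "(n - 1) * (n - 1) \<le> n * (n - 2)" using \<open>(n - 1) * ?m (?ce p) \<le> n * (n - 2)\<close> by linarith
      moreover obtain k where "n = k + 4" using n4 le_iff_add by (metis add.commute)
      ultimately show False by (simp add: algebra_simps)
    qed
  qed
  define A where "A i = {j\<in>{..<n}. ?ce j \<in> G i}" for i
  have hallc: "card J \<le> card (\<Union>(A ` J))" if J: "J \<subseteq> V" for J
  proof (rule ccontr)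
    assume "\<not> ?thesis"
    then have lt: "card (\<Union>(A ` J)) < card J" by simp
    define U where "U = \<Union>(A ` J)"
    define T where "T = {..<n} - U"
    have ltU: "card U < card J" using lt unfolding U_def .
    have UA: "U \<subseteq> {..<n}" unfolding U_def A_def by blast
    have cT: "card T = n - card U" unfolding T_def using UA by (simp add: card_Diff_subset finite_subset)
    have cJ: "card J \<le> n" using J fV cV card_mono by metis
    have miss: "?ce j \<notin> G i" if "j \<in> T" "i \<in> J" for i j
      using that unfolding T_def U_def A_def by blast
    have mT: "card J \<le> ?m (?ce j)" if j: "j \<in> T" for j
    proof -
      have "J \<subseteq> {i\<in>V. ?ce j \<notin> G i}" using J miss[OF j] by blast
      then show ?thesis unfolding mis_def using fV by (intro card_mono) auto
    qed
    have "card T \<ge> 1" using cT ltU cJ by linarith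
    then obtain j0 where j0: "j0 \<in> T" by (metis card.empty not_one_le_zero ex_in_conv)
    have "j0 < n" using j0 unfolding T_def by simp
    then have "card J \<le> n - 2" using mT[OF j0] edge_bd by (meson le_trans)
    then have t3: "card T \<ge> 3" using cT ltU by linarith
    have "J \<noteq> {}" using ltU by auto
    then obtain x where x: "x \<in> J" by blast
    have xV: "x \<in> V" using x J by blast
    define f1 where "f1 j = (vs ! j, vs ! ((j + 1) mod n))" for j
    define f2 where "f2 j = (vs ! ((j + 1) mod n), vs ! j)" for j
    have Tn: "j < n" if "j \<in> T" for j using that unfolding T_def by simp
    have neq: "vs ! j \<noteq> vs ! ((j + 1) mod n)" if "j < n" for j
    proof -
      have pm: "(j + 1) mod n < n" using n4 by simp
      have "j \<noteq> (j + 1) mod n"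
      proof (cases "j + 1 < n")
        case True then show ?thesis by simp
      next
        case False
        then have "j + 1 = n" using that by simp
        then have "(j + 1) mod n = 0" by simp
        then show ?thesis using \<open>j + 1 = n\<close> n4 by simp
      qed
      then show ?thesis using dvs lvs that pm by (simp add: nth_eq_iff_index_eq)
    qed
    have inV: "vs ! j \<in> V" "vs ! ((j + 1) mod n) \<in> V" if "j < n" for j
    proof -
      have pm: "(j + 1) mod n < n" using n4 by simp
      show "vs ! j \<in> V" "vs ! ((j + 1) mod n) \<in> V" using svs lvs that pm nth_mem by blast+
    qed
    have sub1: "f1 ` T \<subseteq> Qs (G x) V"
    proof
      fix q assume "q \<in> f1 ` T"
      then obtain j where j: "j \<in> T" "q = f1 j" by blast
      have "?ce j \<notin> G x" using miss[OF j(1) x] .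
      then show "q \<in> Qs (G x) V" using j ce[OF Tn[OF j(1)]] inV[OF Tn[OF j(1)]] neq[OF Tn[OF j(1)]]
        unfolding f1_def Qs_def Nb_def by simp
    qed
    have sub2: "f2 ` T \<subseteq> Qs (G x) V"
    proof
      fix q assume "q \<in> f2 ` T"
      then obtain j where j: "j \<in> T" "q = f2 j" by blast
      have "?ce j \<notin> G x" using miss[OF j(1) x] .
      moreover have "{vs ! ((j + 1) mod n), vs ! j} = {vs ! j, vs ! ((j + 1) mod n)}" by (rule insert_commute)
      ultimately show "q \<in> Qs (G x) V" using j ce[OF Tn[OF j(1)]] inV[OF Tn[OF j(1)]] neq[OF Tn[OF j(1)]]
        unfolding f2_def Qs_def Nb_def by simp
    qed
    have inj1: "inj_on f1 T"
    proof (rule inj_onI)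
      fix j k assume "j \<in> T" "k \<in> T" "f1 j = f1 k"
      then show "j = k" using Tn dvs lvs unfolding f1_def by (simp add: nth_eq_iff_index_eq)
    qed
    have inj2: "inj_on f2 T"
    proof (rule inj_onI)
      fix j k assume "j \<in> T" "k \<in> T" "f2 j = f2 k"
      then show "j = k" using Tn dvs lvs unfolding f2_def by (simp add: nth_eq_iff_index_eq)
    qed
    have disj: "f1 ` T \<inter> f2 ` T = {}"
    proof (rule ccontr)
      assume "f1 ` T \<inter> f2 ` T \<noteq> {}"
      then obtain j k where jk: "j \<in> T" "k \<in> T" "f1 j = f2 k" by blast
      have jn: "j < n" "k < n" using jk Tn by auto
      have pm: "(j + 1) mod n < n" "(k + 1) mod n < n" using n4 by simp_all
      have "vs ! j = vs ! ((k + 1) mod n)" "vs ! ((j + 1) mod n) = vs ! k" using jk(3) unfolding f1_def f2_def by simp_all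
      then have e: "j = (k + 1) mod n" "k = (j + 1) mod n" using dvs lvs jn pm by (simp_all add: nth_eq_iff_index_eq)
      have n3: "3 \<le> n" using n4 by linarith
      show False by (rule mod_cyc_False[OF n3 jn(1) jn(2) e(1) e(2)])
    qed
    have fT: "finite T" unfolding T_def by simp
    have fQ: "finite (Qs (G x) V)" unfolding Qs_def Nb_def using fV by simp
    have "card (f1 ` T \<union> f2 ` T) = card T + card T"
      using disj fT inj1 inj2 by (simp add: card_Un_disjoint card_image)
    moreover have "card (f1 ` T \<union> f2 ` T) \<le> card (Qs (G x) V)" using sub1 sub2 fQ by (intro card_mono) auto
    ultimately have "card T + card T \<le> 2 * n - 6" using cQ[OF xV] by linarith
    then have t_up: "card T + 3 \<le> n" using n4 by arith
    have "card T * card J \<le> (\<Sum>j\<in>T. ?m (?ce j))"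
      using mT sum_mono[of T "\<lambda>_. card J" "\<lambda>j. ?m (?ce j)"] by simp
    also have "\<dots> \<le> (\<Sum>j<n. ?m (?ce j))" unfolding T_def by (intro sum_mono2) auto
    finally have "card T * card J \<le> ?P" using Psum by simp
    moreover have "n + 1 \<le> card J + card T" using cT ltU cJ by linarith
    ultimately show False using arith_final[of "card T" n "card J" ?P] t3 t_up glob by simp
  qed
  obtain f where f: "inj_on f V" "\<forall>i\<in>V. f i \<in> A i"
    using hall[of V A] fV hallc unfolding A_def by auto
  have fim: "f ` V \<subseteq> {..<n}" using f(2) unfolding A_def by auto
  have "card (f ` V) = n" using card_image[OF f(1)] cV by simp
  then have "f ` V = {..<n}" using fim by (intro card_subset_eq) auto
  then have bij: "bij_betw f V {..<n}" using f(1) unfolding bij_betw_def by simp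
  have good: "cycle_edge vs (f i) \<in> G i" if i: "i \<in> V" for i
  proof -
    have "f i < n" "?ce (f i) \<in> G i" using f(2) i unfolding A_def by auto
    then show ?thesis using cedges_cycle_edge[of "f i" vs] lvs by simp
  qed
  have "ham_cycle_seq {1..n} vs" unfolding ham_cycle_seq_def using dvs svs lvs n4 V_def by simp
  then show ?thesis unfolding rainbow_ham_cycle_def using bij good V_def by blast
qed

end
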